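(* Let $G=\mathrm{Aut}(\mathbf{K})$ for a Fraïssé structure $\mathbf{K}$ with exhaustion $\bigcup_n\mathbf{A}_n$, and let $M\subseteq S(G)$ be a minimal subflow. Suppose $\alpha,\gamma\in S(G)$ are such that $\phi(\alpha)=\phi(\gamma)$ for every retraction $\phi:S(G)\to M$, and let $S\subseteq H_m$ be minimal. Then $S\in\alpha(m)$ if and only if $S\in\gamma(m)$.
   Context: $\mathbf{K}$ is a countably infinite ultrahomogeneous relational structure; $\mathbf{A}_1\subseteq\mathbf{A}_2\subseteq\cdots$ finite substructures, $|\mathbf{A}_n|=n$, union $\mathbf{K}$; $H_n=\mathrm{Emb}(\mathbf{A}_n,\mathbf{K})$. $S(G)$ is the inverse limit of the spaces $\beta H_n$ of ultrafilters along the continuous extensions of restriction maps $H_n\to H_m$; $\alpha(n)$ is the $n$-th coordinate. Right $G$-action: for $S\subseteq H_m$, $S\in(\alpha g)(m)$ iff $\{x\in H_n:x\circ g|_{\mathbf{A}_m}\in S\}\in\alpha(n)$ for $n$ with $g(\mathbf{A}_m)\subseteq\mathbf{A}_n$; for $f\in H_m$ set $\alpha\cdot f=(\alpha g)(m)$ for any $g\in G$ extending $f$. Semigroup product: $S\in(\alpha\gamma)(m)$ iff $\{f\in H_m:S\in\alpha\cdot f\}\in\gamma(m)$. A minimal subflow is a nonempty closed $G$-invariant set with no proper such subset; a retraction onto $M$ is a continuous $G$-equivariant $\phi:S(G)\to M$ with $\phi|_M=\mathrm{id}$. Identify subsets of $H_m$ with $2^{H_m}$, with right action $(\chi\cdot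 g)(f)=\chi(g\circ f)$; $S\subseteq H_m$ is minimal if $\overline{\chi_S\cdot G}$ is a minimal $G$-flow. *)

theory Defs
  imports "HOL-Analysis.Analysis"
begin

text \<open>The countably infinite structure K has universe nat; its relations are
  given by R :: 'r => nat list => bool (each symbol r of arity ar r). Embeddings A_m -> K are represented
  as extensional functions (undefined outside A m).\<close>

definition is_emb :: "('r \<Rightarrow> nat list \<Rightarrow> bool) \<Rightarrow> nat set \<Rightarrow> (nat \<Rightarrow> nat) \<Rightarrow> bool" where
  "is_emb R B f \<longleftrightarrow> inj_on f B \<and> (\<forall>r xs. set xs \<subseteq> B \<longrightarrow> (R r (map f xs) \<longleftrightarrow> R r xs))"

definition Hset :: "('r \<Rightarrow> nat list \<Rightarrow> bool) \<Rightarrow> (nat \<Rightarrow> nat set) \<Rightarrow> nat \<Rightarrow> (nat \<Rightarrow> nat) set" where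
  "Hset R A m = {f \<in> extensional (A m). is_emb R (A m) f}"

definition Aut :: "('r \<Rightarrow> nat list \<Rightarrow> bool) \<Rightarrow> (nat \<Rightarrow> nat) set" where
  "Aut R = {g. bij g \<and> is_emb R UNIV g}"

definition ultrahomogeneous :: "('r \<Rightarrow> nat list \<Rightarrow> bool) \<Rightarrow> bool" where
  "ultrahomogeneous R \<longleftrightarrow>
     (\<forall>B h. finite B \<and> is_emb R B h \<longrightarrow> (\<exists>g\<in>Aut R. \<forall>x\<in>B. g x = h x))"

definition ultrafilter_on :: "'a set \<Rightarrow> 'a set set \<Rightarrow> bool" where
  "ultrafilter_on X U \<longleftrightarrow> U \<subseteq> Pow X \<and> X \<in> U \<and> {} \<notin> U
     \<and> (\<forall>a b. a \<in> U \<and> b \<in> U \<longrightarrow> a \<inter> b \<in> U)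
     \<and> (\<forall>a b. a \<in> U \<and> a \<subseteq> b \<and> b \<subseteq> X \<longrightarrow> b \<in> U)
     \<and> (\<forall>a. a \<subseteq> X \<longrightarrow> a \<in> U \<or> X - a \<in> U)"

definition push :: "('a \<Rightarrow> 'b) \<Rightarrow> 'a set \<Rightarrow> 'b set \<Rightarrow> 'a set set \<Rightarrow> 'b set set" where
  "push \<rho> X Y U = {S. S \<subseteq> Y \<and> {x \<in> X. \<rho> x \<in> S} \<in> U}"

text \<open>S(G): the inverse limit of the beta H_n along restriction maps.\<close>
definition SG :: "('r \<Rightarrow> nat list \<Rightarrow> bool) \<Rightarrow> (nat \<Rightarrow> nat set) \<Rightarrow> (nat \<Rightarrow> (nat \<Rightarrow> nat) set set) set" where
  "SG R A = {\<alpha>. (\<forall>n. ultrafilter_on (Hset R A n) (\<alpha> n))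
      \<and> (\<forall>m n. m \<le> n \<longrightarrow>
           \<alpha> m = push (\<lambda>f. restrict f (A m)) (Hset R A n) (Hset R A m) (\<alpha> n))}"

definition SGtop :: "('r \<Rightarrow> nat list \<Rightarrow> bool) \<Rightarrow> (nat \<Rightarrow> nat set) \<Rightarrow> (nat \<Rightarrow> (nat \<Rightarrow> nat) set set) topology" where
  "SGtop R A = topology_generated_by
      {{\<alpha> \<in> SG R A. S \<in> \<alpha> n} | n S. S \<subseteq> Hset R A n}"

text \<open>Right action of G on S(G).\<close>
definition gact :: "('r \<Rightarrow> nat list \<Rightarrow> bool) \<Rightarrow> (nat \<Rightarrow> nat set) \<Rightarrow> (nat \<Rightarrow> (nat \<Rightarrow> nat) set set) \<Rightarrow> (nat \<Rightarrow> nat) \<Rightarrow> (nat \<Rightarrow> (nat \<Rightarrow> nat) set set)" where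
  "gact R A \<alpha> g = (\<lambda>m. let n = (LEAST n. g ` A m \<subseteq> A n) in
      {S. S \<subseteq> Hset R A m \<and> {x \<in> Hset R A n. restrict (x \<circ> g) (A m) \<in> S} \<in> \<alpha> n})"

definition minimal_flow :: "'a topology \<Rightarrow> ('a \<Rightarrow> 'g \<Rightarrow> 'a) \<Rightarrow> 'g set \<Rightarrow> 'a set \<Rightarrow> bool" where
  "minimal_flow X act Gs Y \<longleftrightarrow> Y \<noteq> {} \<and> closedin X Y \<and> (\<forall>y\<in>Y. \<forall>g\<in>Gs. act y g \<in> Y)
     \<and> (\<forall>Z. Z \<subseteq> Y \<and> Z \<noteq> {} \<and> closedin X Z \<and> (\<forall>z\<in>Z. \<forall>g\<in>Gs. act z g \<in> Z) \<longrightarrow> Z = Y)"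

definition retraction :: "('r \<Rightarrow> nat list \<Rightarrow> bool) \<Rightarrow> (nat \<Rightarrow> nat set) \<Rightarrow> (nat \<Rightarrow> (nat \<Rightarrow> nat) set set) set
    \<Rightarrow> ((nat \<Rightarrow> (nat \<Rightarrow> nat) set set) \<Rightarrow> (nat \<Rightarrow> (nat \<Rightarrow> nat) set set)) \<Rightarrow> bool" where
  "retraction R A M \<phi> \<longleftrightarrow> continuous_map (SGtop R A) (SGtop R A) \<phi> \<and> \<phi> ` SG R A \<subseteq> M
     \<and> (\<forall>\<alpha>\<in>SG R A. \<forall>g\<in>Aut R. \<phi> (gact R A \<alpha> g) = gact R A (\<phi> \<alpha>) g)
     \<and> (\<forall>\<alpha>\<in>M. \<phi> \<alpha> = \<alpha>)"

text \<open>The flow 2^{H_m} (product of discrete two-point spaces) with right action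
  (chi . g)(f) = chi(g o f).\<close>
definition cube_top :: "('r \<Rightarrow> nat list \<Rightarrow> bool) \<Rightarrow> (nat \<Rightarrow> nat set) \<Rightarrow> nat \<Rightarrow> ((nat \<Rightarrow> nat) \<Rightarrow> bool) topology" where
  "cube_top R A m = product_topology (\<lambda>_. discrete_topology (UNIV :: bool set)) (Hset R A m)"

definition chi :: "('r \<Rightarrow> nat list \<Rightarrow> bool) \<Rightarrow> (nat \<Rightarrow> nat set) \<Rightarrow> nat \<Rightarrow> (nat \<Rightarrow> nat) set \<Rightarrow> ((nat \<Rightarrow> nat) \<Rightarrow> bool)" where
  "chi R A m S = restrict (\<lambda>f. f \<in> S) (Hset R A m)"

definition cact :: "('r \<Rightarrow> nat list \<Rightarrow> bool) \<Rightarrow> (nat \<Rightarrow> nat set) \<Rightarrow> nat \<Rightarrow> ((nat \<Rightarrow> nat) \<Rightarrow> bool) \<Rightarrow> (nat \<Rightarrow> nat) \<Rightarrow> ((nat \<Rightarrow> nat) \<Rightarrow> bool)" where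
  "cact R A m c g = restrict (\<lambda>f. c (restrict (g \<circ> f) (A m))) (Hset R A m)"

definition minimal_set :: "('r \<Rightarrow> nat list \<Rightarrow> bool) \<Rightarrow> (nat \<Rightarrow> nat set) \<Rightarrow> nat \<Rightarrow> (nat \<Rightarrow> nat) set \<Rightarrow> bool" where
  "minimal_set R A m S \<longleftrightarrow> S \<subseteq> Hset R A m \<and>
     minimal_flow (cube_top R A m) (cact R A m) (Aut R)
       ((cube_top R A m) closure_of ((\<lambda>g. cact R A m (chi R A m S) g) ` Aut R))"

end

theory Submission
  imports Defs
begin


lemma uf_sub: "ultrafilter_on X U \<Longrightarrow> S \<in> U \<Longrightarrow> S \<subseteq> X"
  unfolding ultrafilter_on_def by (meson PowD subsetD)
lemma uf_ne: "ultrafilter_on X U \<Longrightarrow> S \<in> U \<Longrightarrow> S \<noteq> {}"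
  unfolding ultrafilter_on_def by metis
lemma uf_int: "ultrafilter_on X U \<Longrightarrow> a \<in> U \<Longrightarrow> b \<in> U \<Longrightarrow> a \<inter> b \<in> U"
  unfolding ultrafilter_on_def by metis
lemma uf_up: "ultrafilter_on X U \<Longrightarrow> a \<in> U \<Longrightarrow> a \<subseteq> b \<Longrightarrow> b \<subseteq> X \<Longrightarrow> b \<in> U"
  unfolding ultrafilter_on_def by metis
lemma uf_top: "ultrafilter_on X U \<Longrightarrow> X \<in> U"
  unfolding ultrafilter_on_def by metis
lemma uf_cases: "ultrafilter_on X U \<Longrightarrow> a \<subseteq> X \<Longrightarrow> a \<in> U \<or> X - a \<in> U"
  unfolding ultrafilter_on_def by metis
lemma uf_compl: "ultrafilter_on X U \<Longrightarrow> S \<subseteq> X \<Longrightarrow> S \<notin> U \<longleftrightarrow> X - S \<in> U"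
proof -
  assume U: "ultrafilter_on X U" and S: "S \<subseteq> X"
  have "S \<inter> (X - S) = {}" by auto
  then have "\<not> (S \<in> U \<and> X - S \<in> U)" using uf_int[OF U, of S "X - S"] uf_ne[OF U] by metis
  then show ?thesis using uf_cases[OF U S] by blast
qed

lemma uf_push: "ultrafilter_on X U \<Longrightarrow> \<rho> ` X \<subseteq> Y \<Longrightarrow> ultrafilter_on Y (push \<rho> X Y U)"
proof -
  assume U: "ultrafilter_on X U" and r: "\<rho> ` X \<subseteq> Y"
  have e1: "{x \<in> X. \<rho> x \<in> Y} = X" using r by auto
  have e2: "\<And>a b. {x \<in> X. \<rho> x \<in> a \<inter> b} = {x \<in> X. \<rho> x \<in> a} \<inter> {x \<in> X. \<rho> x \<in> b}" by auto
  have e3: "\<And>a. {x \<in> X. \<rho> x \<in> Y - a} = X - {x \<in> X. \<rho> x \<in> a}" using r by auto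
  show ?thesis unfolding ultrafilter_on_def push_def
  proof (intro conjI allI impI)
    show "Y \<in> {S. S \<subseteq> Y \<and> {x \<in> X. \<rho> x \<in> S} \<in> U}" using e1 uf_top[OF U] by auto
    show "{} \<notin> {S. S \<subseteq> Y \<and> {x \<in> X. \<rho> x \<in> S} \<in> U}" using uf_ne[OF U] by auto
  next
    fix a b assume "a \<in> {S. S \<subseteq> Y \<and> {x \<in> X. \<rho> x \<in> S} \<in> U} \<and> b \<in> {S. S \<subseteq> Y \<and> {x \<in> X. \<rho> x \<in> S} \<in> U}"
    then show "a \<inter> b \<in> {S. S \<subseteq> Y \<and> {x \<in> X. \<rho> x \<in> S} \<in> U}" using uf_int[OF U] e2 by auto
  next
    fix a b assume "a \<in> {S. S \<subseteq> Y \<and> {x \<in> X. \<rho> x \<in> S} \<in> U} \<and> a \<subseteq> b \<and> b \<subseteq> Y"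
    then show "b \<in> {S. S \<subseteq> Y \<and> {x \<in> X. \<rho> x \<in> S} \<in> U}"
      using uf_up[OF U, of "{x \<in> X. \<rho> x \<in> a}" "{x \<in> X. \<rho> x \<in> b}"] by auto
  next
    fix a assume "a \<subseteq> Y"
    then show "a \<in> {S. S \<subseteq> Y \<and> {x \<in> X. \<rho> x \<in> S} \<in> U} \<or> Y - a \<in> {S. S \<subseteq> Y \<and> {x \<in> X. \<rho> x \<in> S} \<in> U}"
      using uf_compl[OF U, of "{x \<in> X. \<rho> x \<in> a}"] e3 by auto
  qed auto
qed

lemma push_comp: "\<rho>1 ` X \<subseteq> Y \<Longrightarrow> push \<rho>2 Y Z (push \<rho>1 X Y U) = push (\<rho>2 \<circ> \<rho>1) X Z U"
proof -
  assume r: "\<rho>1 ` X \<subseteq> Y"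
  have "\<And>S. {x \<in> X. \<rho>1 x \<in> {y \<in> Y. \<rho>2 y \<in> S}} = {x \<in> X. (\<rho>2 \<circ> \<rho>1) x \<in> S}" using r by auto
  then show ?thesis unfolding push_def by auto
qed

lemma push_cong: "(\<And>x. x \<in> X \<Longrightarrow> \<rho> x = \<rho>' x) \<Longrightarrow> push \<rho> X Y U = push \<rho>' X Y U"
proof -
  assume "\<And>x. x \<in> X \<Longrightarrow> \<rho> x = \<rho>' x"
  then have "\<And>S. {x \<in> X. \<rho> x \<in> S} = {x \<in> X. \<rho>' x \<in> S}" by auto
  then show ?thesis unfolding push_def by auto
qed

lemma uf_lim: "ultrafilter_on X U \<Longrightarrow> (\<And>x. x \<in> X \<Longrightarrow> ultrafilter_on Y (V x))
  \<Longrightarrow> ultrafilter_on Y {S. S \<subseteq> Y \<and> {x \<in> X. S \<in> V x} \<in> U}"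
proof -
  assume U: "ultrafilter_on X U" and V: "\<And>x. x \<in> X \<Longrightarrow> ultrafilter_on Y (V x)"
  have e1: "{x \<in> X. Y \<in> V x} = X" using V uf_top by blast
  have e0: "{x \<in> X. {} \<in> V x} = {}" using V uf_ne by blast
  have e2: "\<And>a b. a \<subseteq> Y \<Longrightarrow> b \<subseteq> Y \<Longrightarrow> {x \<in> X. a \<inter> b \<in> V x} = {x \<in> X. a \<in> V x} \<inter> {x \<in> X. b \<in> V x}"
  proof -
    fix a b assume a: "a \<subseteq> Y" and b: "b \<subseteq> Y"
    have "\<And>x. x \<in> X \<Longrightarrow> a \<inter> b \<in> V x \<longleftrightarrow> a \<in> V x \<and> b \<in> V x"
    proof
      fix x assume x: "x \<in> X" "a \<inter> b \<in> V x"
      show "a \<in> V x \<and> b \<in> V x" using uf_up[OF V[OF x(1)] x(2)] a b by auto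
    next
      fix x assume x: "x \<in> X" "a \<in> V x \<and> b \<in> V x"
      show "a \<inter> b \<in> V x" using uf_int[OF V[OF x(1)]] x(2) by auto
    qed
    then show "{x \<in> X. a \<inter> b \<in> V x} = {x \<in> X. a \<in> V x} \<inter> {x \<in> X. b \<in> V x}" by auto
  qed
  have e3: "\<And>a. a \<subseteq> Y \<Longrightarrow> {x \<in> X. Y - a \<in> V x} = X - {x \<in> X. a \<in> V x}" using V uf_compl by blast
  have e4: "\<And>a b. a \<subseteq> b \<Longrightarrow> b \<subseteq> Y \<Longrightarrow> {x \<in> X. a \<in> V x} \<subseteq> {x \<in> X. b \<in> V x}" using V uf_up by blast
  show ?thesis unfolding ultrafilter_on_def
  proof (intro conjI allI impI)
    show "Y \<in> {S. S \<subseteq> Y \<and> {x \<in> X. S \<in> V x} \<in> U}" using e1 uf_top[OF U] by auto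
    show "{} \<notin> {S. S \<subseteq> Y \<and> {x \<in> X. S \<in> V x} \<in> U}" using e0 uf_ne[OF U] by auto
  next
    fix a b assume "a \<in> {S. S \<subseteq> Y \<and> {x \<in> X. S \<in> V x} \<in> U} \<and> b \<in> {S. S \<subseteq> Y \<and> {x \<in> X. S \<in> V x} \<in> U}"
    then show "a \<inter> b \<in> {S. S \<subseteq> Y \<and> {x \<in> X. S \<in> V x} \<in> U}" using uf_int[OF U] e2 by auto
  next
    fix a b assume "a \<in> {S. S \<subseteq> Y \<and> {x \<in> X. S \<in> V x} \<in> U} \<and> a \<subseteq> b \<and> b \<subseteq> Y"
    then have "{x \<in> X. a \<in> V x} \<in> U" "{x \<in> X. a \<in> V x} \<subseteq> {x \<in> X. b \<in> V x}" "b \<subseteq> Y"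
      using e4 by auto
    then have "{x \<in> X. b \<in> V x} \<in> U" using uf_up[OF U] by blast
    then show "b \<in> {S. S \<subseteq> Y \<and> {x \<in> X. S \<in> V x} \<in> U}" using \<open>b \<subseteq> Y\<close> by blast
  next
    fix a assume "a \<subseteq> Y"
    then show "a \<in> {S. S \<subseteq> Y \<and> {x \<in> X. S \<in> V x} \<in> U} \<or> Y - a \<in> {S. S \<subseteq> Y \<and> {x \<in> X. S \<in> V x} \<in> U}"
      using uf_compl[OF U, of "{x \<in> X. a \<in> V x}"] e3 by auto
  qed auto
qed

lemma uf_finite:
  assumes U: "ultrafilter_on X U"
  shows "finite F \<Longrightarrow> (\<And>f. f \<in> F \<Longrightarrow> {x \<in> X. P f x} \<in> U) \<Longrightarrow> {x \<in> X. \<forall>f\<in>F. P f x} \<in> U"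
proof (induction F rule: finite_induct)
  case empty then show ?case using uf_top[OF U] by auto
next
  case (insert a F)
  have "{x \<in> X. \<forall>f\<in>insert a F. P f x} = {x \<in> X. P a x} \<inter> {x \<in> X. \<forall>f\<in>F. P f x}" by auto
  then show ?case using insert uf_int[OF U] by auto
qed




locale fk =
  fixes R :: "'r \<Rightarrow> nat list \<Rightarrow> bool" and A :: "nat \<Rightarrow> nat set"
  assumes uh: "ultrahomogeneous R" and chain: "\<And>n. A n \<subseteq> A (Suc n)"
    and fin: "\<And>n. finite (A n)" and exh: "(\<Union>n. A n) = UNIV"
begin

abbreviation H where "H \<equiv> Hset R A"

lemma Amono: "m \<le> n \<Longrightarrow> A m \<subseteq> A n"
  using lift_Suc_mono_le[of A, OF chain] by blast

lemma fin_level: "finite B \<Longrightarrow> \<exists>n. B \<subseteq> A n"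
proof (induction B rule: finite_induct)
  case empty then show ?case by auto
next
  case (insert x B)
  then obtain n where n: "B \<subseteq> A n" by auto
  obtain k where k: "x \<in> A k" using exh by blast
  have "B \<subseteq> A (max n k)" "x \<in> A (max n k)" using n k Amono[of n "max n k"] Amono[of k "max n k"] by auto
  then show ?case by blast
qed

lemma emb_mono: "is_emb R B f \<Longrightarrow> C \<subseteq> B \<Longrightarrow> is_emb R C f"
  unfolding is_emb_def using inj_on_subset by (metis subset_trans)

lemma emb_comp: "is_emb R B f \<Longrightarrow> is_emb R C g \<Longrightarrow> f ` B \<subseteq> C \<Longrightarrow> is_emb R B (g \<circ> f)"
proof -
  assume f: "is_emb R B f" and g: "is_emb R C g" and fg: "f ` B \<subseteq> C"
  have i: "inj_on (g \<circ> f) B" using f g fg unfolding is_emb_def by (meson comp_inj_on inj_on_subset)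
  have "\<And>r xs. set xs \<subseteq> B \<Longrightarrow> R r (map (g \<circ> f) xs) \<longleftrightarrow> R r xs"
  proof -
    fix r xs assume xs: "set xs \<subseteq> B"
    have "set (map f xs) \<subseteq> C" using xs fg by auto
    then have "R r (map g (map f xs)) \<longleftrightarrow> R r (map f xs)" using g unfolding is_emb_def by blast
    also have "\<dots> \<longleftrightarrow> R r xs" using f xs unfolding is_emb_def by blast
    finally show "R r (map (g \<circ> f) xs) \<longleftrightarrow> R r xs" by simp
  qed
  then show ?thesis using i unfolding is_emb_def by blast
qed

lemma emb_cong: "is_emb R B f \<Longrightarrow> (\<And>x. x \<in> B \<Longrightarrow> f x = f' x) \<Longrightarrow> is_emb R B f'"
proof -
  assume f: "is_emb R B f" and e: "\<And>x. x \<in> B \<Longrightarrow> f x = f' x"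
  have "inj_on f' B" using f e inj_on_cong unfolding is_emb_def by blast
  moreover have "\<And>r xs. set xs \<subseteq> B \<Longrightarrow> map f' xs = map f xs" using e by (simp add: subset_iff)
  ultimately show ?thesis using f unfolding is_emb_def by metis
qed

lemma H_iff: "f \<in> H m \<longleftrightarrow> f \<in> extensional (A m) \<and> is_emb R (A m) f"
  by (simp add: Hset_def)

lemma rs_H: "is_emb R (A m) f \<Longrightarrow> restrict f (A m) \<in> H m"
  unfolding H_iff by (auto intro: emb_cong)

lemma rsH: "x \<in> H n \<Longrightarrow> m \<le> n \<Longrightarrow> restrict x (A m) \<in> H m"
  using rs_H emb_mono Amono H_iff by metis

lemma comp_H: "x \<in> H n \<Longrightarrow> is_emb R (A m) f \<Longrightarrow> f ` A m \<subseteq> A n \<Longrightarrow> restrict (x \<circ> f) (A m) \<in> H m"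
  using rs_H emb_comp H_iff by metis

lemma aut_emb: "g \<in> Aut R \<Longrightarrow> is_emb R B g"
  unfolding Aut_def using emb_mono by blast

lemma id_Aut: "id \<in> Aut R"
  unfolding Aut_def is_emb_def by auto

lemma H_level: "f \<in> H m \<Longrightarrow> \<exists>n. f ` A m \<subseteq> A n"
  using fin_level fin by blast

lemma H_level_fin: "finite F \<Longrightarrow> F \<subseteq> H m \<Longrightarrow> \<exists>n. \<forall>f\<in>F. f ` A m \<subseteq> A n"
proof -
  assume F: "finite F" "F \<subseteq> H m"
  have "finite (\<Union>f\<in>F. f ` A m)" using F fin by auto
  then obtain n where "(\<Union>f\<in>F. f ` A m) \<subseteq> A n" using fin_level by blast
  then show ?thesis by blast
qed

lemma extend: "f \<in> H n \<Longrightarrow> \<exists>g\<in>Aut R. \<forall>x\<in>A n. g x = f x"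
  using uh fin unfolding ultrahomogeneous_def H_iff by blast

lemma H_ext: "f \<in> H m \<Longrightarrow> restrict f (A m) = f"
  using H_iff by (simp add: extensional_restrict)

lemma SG_uf: "\<beta> \<in> SG R A \<Longrightarrow> ultrafilter_on (H n) (\<beta> n)"
  unfolding SG_def by blast

lemma pullback: "\<beta> \<in> SG R A \<Longrightarrow> m \<le> n \<Longrightarrow>
   T \<in> \<beta> m \<longleftrightarrow> T \<subseteq> H m \<and> {x \<in> H n. restrict x (A m) \<in> T} \<in> \<beta> n"
proof -
  assume b: "\<beta> \<in> SG R A" and mn: "m \<le> n"
  then have "\<beta> m = push (\<lambda>f. restrict f (A m)) (H n) (H m) (\<beta> n)" unfolding SG_def by blast
  then show ?thesis unfolding push_def by auto
qed


definition dot :: "(nat \<Rightarrow> (nat \<Rightarrow> nat) set set) \<Rightarrow> nat \<Rightarrow> (nat \<Rightarrow> nat) \<Rightarrow> (nat \<Rightarrow> nat) set set" where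
  "dot \<beta> m f = (let n = (LEAST n. f ` A m \<subseteq> A n) in
      {S. S \<subseteq> H m \<and> {x \<in> H n. restrict (x \<circ> f) (A m) \<in> S} \<in> \<beta> n})"

lemma gact_dot: "gact R A \<beta> g = (\<lambda>m. dot \<beta> m g)"
  unfolding gact_def dot_def by simp

lemma set_eq_helper: "(\<And>y. y \<in> X \<Longrightarrow> g y \<in> Y) \<Longrightarrow> (\<And>y. y \<in> X \<Longrightarrow> h (g y) = k y)
   \<Longrightarrow> {y \<in> X. g y \<in> {x \<in> Y. h x \<in> S}} = {y \<in> X. k y \<in> S}"
  by auto

lemma rs_comp_eq: "f ` A m \<subseteq> A L \<Longrightarrow> restrict (restrict y (A L) \<circ> f) (A m) = restrict (y \<circ> f) (A m)"
  by (intro restrict_ext) auto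

lemma D_lev:
  assumes b: "\<beta> \<in> SG R A" and fn: "f ` A m \<subseteq> A n"
  shows "dot \<beta> m f = {S. S \<subseteq> H m \<and> {x \<in> H n. restrict (x \<circ> f) (A m) \<in> S} \<in> \<beta> n}"
proof -
  define L where "L = (LEAST n. f ` A m \<subseteq> A n)"
  have L1: "f ` A m \<subseteq> A L" unfolding L_def by (rule LeastI[of _ n], rule fn)
  have L2: "L \<le> n" unfolding L_def by (rule Least_le, rule fn)
  have "\<And>S. {x \<in> H L. restrict (x \<circ> f) (A m) \<in> S} \<in> \<beta> L \<longleftrightarrow> {x \<in> H n. restrict (x \<circ> f) (A m) \<in> S} \<in> \<beta> n"
  proof -
    fix S
    have "{y \<in> H n. restrict y (A L) \<in> {x \<in> H L. restrict (x \<circ> f) (A m) \<in> S}} = {x \<in> H n. restrict (x \<circ> f) (A m) \<in> S}"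
      by (rule set_eq_helper[where h="\<lambda>x. restrict (x \<circ> f) (A m)"]) (simp_all only: rsH[OF _ L2] rs_comp_eq[OF L1])
    then show "?thesis S" using pullback[OF b L2, of "{x \<in> H L. restrict (x \<circ> f) (A m) \<in> S}"] by auto
  qed
  then show ?thesis unfolding dot_def L_def[symmetric] Let_def by auto
qed

lemma D_lev_mem:
  assumes b: "\<beta> \<in> SG R A" and fn: "f ` A m \<subseteq> A n"
  shows "S \<in> dot \<beta> m f \<longleftrightarrow> S \<subseteq> H m \<and> {x \<in> H n. restrict (x \<circ> f) (A m) \<in> S} \<in> \<beta> n"
  using D_lev[OF b fn] by blast

lemma D_cong: "(\<And>x. x \<in> A m \<Longrightarrow> f x = f' x) \<Longrightarrow> dot \<beta> m f = dot \<beta> m f'"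
proof -
  assume e: "\<And>x. x \<in> A m \<Longrightarrow> f x = f' x"
  have i: "f ` A m = f' ` A m" using e by auto
  have e2: "\<And>x. restrict (x \<circ> f) (A m) = restrict (x \<circ> f') (A m)" using e by (intro restrict_ext) auto
  show ?thesis unfolding dot_def i by (simp only: e2)
qed

lemma D_comp:
  assumes b: "\<beta> \<in> SG R A" and fn: "f ` A m \<subseteq> A n" and x: "x \<in> H n"
  shows "dot \<beta> m (x \<circ> f) = push (\<lambda>y. restrict (y \<circ> f) (A m)) (H n) (H m) (dot \<beta> n x)"
proof -
  obtain N where N: "x ` A n \<subseteq> A N" using H_level[OF x] by blast
  have xe: "is_emb R (A n) x" using x H_iff by blast
  have N2: "(x \<circ> f) ` A m \<subseteq> A N" using fn N by auto
  have "\<And>S. S \<subseteq> H m \<Longrightarrow> {z \<in> H N. restrict (z \<circ> x) (A n) \<in> {y \<in> H n. restrict (y \<circ> f) (A m) \<in> S}}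
      = {z \<in> H N. restrict (z \<circ> (x \<circ> f)) (A m) \<in> S}"
  proof -
    fix S
    have h1: "\<And>z. z \<in> H N \<Longrightarrow> restrict (z \<circ> x) (A n) \<in> H n" using comp_H[OF _ xe N] by blast
    have h2: "\<And>z. restrict (restrict (z \<circ> x) (A n) \<circ> f) (A m) = restrict (z \<circ> (x \<circ> f)) (A m)"
      using rs_comp_eq[OF fn] by (metis o_assoc)
    show "?thesis S"
      by (rule set_eq_helper[where h="\<lambda>y. restrict (y \<circ> f) (A m)"]) (simp_all only: h1 h2)
  qed
  then show ?thesis unfolding D_lev[OF b N2] D_lev[OF b N] push_def by auto
qed

lemma D_rs: "dot \<beta> m (restrict f (A m)) = dot \<beta> m f"
  by (rule D_cong) simp

lemma dot_uf:
  assumes b: "\<beta> \<in> SG R A" and f: "is_emb R (A m) f" and fn: "f ` A m \<subseteq> A n"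
  shows "ultrafilter_on (H m) (dot \<beta> m f)"
proof -
  have "dot \<beta> m f = push (\<lambda>x. restrict (x \<circ> f) (A m)) (H n) (H m) (\<beta> n)"
    unfolding D_lev[OF b fn] push_def by simp
  moreover have "(\<lambda>x. restrict (x \<circ> f) (A m)) ` H n \<subseteq> H m" using comp_H[OF _ f fn] by blast
  ultimately show ?thesis using uf_push[OF SG_uf[OF b]] by metis
qed

lemma dotH_uf: "\<beta> \<in> SG R A \<Longrightarrow> f \<in> H m \<Longrightarrow> ultrafilter_on (H m) (dot \<beta> m f)"
  using dot_uf H_level H_iff by metis

lemma GA_SG:
  assumes b: "\<beta> \<in> SG R A" and g: "g \<in> Aut R"
  shows "gact R A \<beta> g \<in> SG R A"
proof -
  have U: "\<forall>m. ultrafilter_on (H m) (gact R A \<beta> g m)"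
  proof
    fix m obtain n where "g ` A m \<subseteq> A n" using fin_level fin by blast
    then show "ultrafilter_on (H m) (gact R A \<beta> g m)" unfolding gact_dot using dot_uf[OF b aut_emb[OF g]] by blast
  qed
  have C: "\<forall>m m'. m \<le> m' \<longrightarrow> gact R A \<beta> g m = push (\<lambda>f. restrict f (A m)) (H m') (H m) (gact R A \<beta> g m')"
  proof (intro allI impI)
    fix m m' :: nat assume mm: "m \<le> m'"
    obtain n where n: "g ` A m' \<subseteq> A n" using fin_level fin by blast
    have n2: "g ` A m \<subseteq> A n" using n Amono[OF mm] by auto
    have e1: "gact R A \<beta> g m = push (\<lambda>x. restrict (x \<circ> g) (A m)) (H n) (H m) (\<beta> n)"
      unfolding gact_dot D_lev[OF b n2] push_def by simp
    have e2: "gact R A \<beta> g m' = push (\<lambda>x. restrict (x \<circ> g) (A m')) (H n) (H m') (\<beta> n)"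
      unfolding gact_dot D_lev[OF b n] push_def by simp
    have im: "(\<lambda>x. restrict (x \<circ> g) (A m')) ` H n \<subseteq> H m'" using comp_H[OF _ aut_emb[OF g] n] by auto
    have "push (\<lambda>f. restrict f (A m)) (H m') (H m) (gact R A \<beta> g m')
       = push ((\<lambda>f. restrict f (A m)) \<circ> (\<lambda>x. restrict (x \<circ> g) (A m'))) (H n) (H m) (\<beta> n)"
      unfolding e2 by (rule push_comp[OF im])
    also have "\<dots> = push (\<lambda>x. restrict (x \<circ> g) (A m)) (H n) (H m) (\<beta> n)"
      using Amono[OF mm] by (intro push_cong) (simp add: Int_absorb1)
    finally show "gact R A \<beta> g m = push (\<lambda>f. restrict f (A m)) (H m') (H m) (gact R A \<beta> g m')"
      using e1 by simp
  qed
  show ?thesis unfolding SG_def using U C by blast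
qed


lemma D_gact:
  assumes b: "\<beta> \<in> SG R A" and g: "g \<in> Aut R" and f: "f \<in> H m"
  shows "dot (gact R A \<beta> g) m f = dot \<beta> m (g \<circ> f)"
proof -
  obtain n where fn: "f ` A m \<subseteq> A n" using H_level[OF f] by blast
  obtain N where N: "g ` A n \<subseteq> A N" using fin_level fin by blast
  have N2: "(g \<circ> f) ` A m \<subseteq> A N" using fn N by auto
  have "\<And>S. {z \<in> H N. restrict (z \<circ> g) (A n) \<in> {y \<in> H n. restrict (y \<circ> f) (A m) \<in> S}}
      = {z \<in> H N. restrict (z \<circ> (g \<circ> f)) (A m) \<in> S}"
  proof -
    fix S
    have h1: "\<And>z. z \<in> H N \<Longrightarrow> restrict (z \<circ> g) (A n) \<in> H n" using comp_H[OF _ aut_emb[OF g] N] by blast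
    have h2: "\<And>z. restrict (restrict (z \<circ> g) (A n) \<circ> f) (A m) = restrict (z \<circ> (g \<circ> f)) (A m)"
      using rs_comp_eq[OF fn] by (metis o_assoc)
    show "?thesis S"
      by (rule set_eq_helper[where h="\<lambda>y. restrict (y \<circ> f) (A m)"]) (simp_all only: h1 h2)
  qed
  moreover have E1: "dot (gact R A \<beta> g) m f = {S. S \<subseteq> H m \<and> {x \<in> H n. restrict (x \<circ> f) (A m) \<in> S} \<in> gact R A \<beta> g n}"
    by (rule D_lev[OF GA_SG[OF b g] fn])
  moreover have E2: "gact R A \<beta> g n = {T. T \<subseteq> H n \<and> {z \<in> H N. restrict (z \<circ> g) (A n) \<in> T} \<in> \<beta> N}"
    unfolding gact_dot by (rule D_lev[OF b N])
  moreover have E3: "dot \<beta> m (g \<circ> f) = {S. S \<subseteq> H m \<and> {z \<in> H N. restrict (z \<circ> (g \<circ> f)) (A m) \<in> S} \<in> \<beta> N}"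
    by (rule D_lev[OF b N2])
  ultimately show ?thesis by auto
qed

definition mult :: "(nat \<Rightarrow> (nat \<Rightarrow> nat) set set) \<Rightarrow> (nat \<Rightarrow> (nat \<Rightarrow> nat) set set) \<Rightarrow> (nat \<Rightarrow> (nat \<Rightarrow> nat) set set)" where
  "mult \<beta> \<delta> = (\<lambda>m. {S. S \<subseteq> H m \<and> {f \<in> H m. S \<in> dot \<beta> m f} \<in> \<delta> m})"

lemma D_down:
  assumes b: "\<beta> \<in> SG R A" and mn: "m \<le> n" and h: "h \<in> H n" and S: "S \<subseteq> H m"
  shows "{y \<in> H n. restrict y (A m) \<in> S} \<in> dot \<beta> n h \<longleftrightarrow> S \<in> dot \<beta> m h"
proof -
  have "dot \<beta> m (h \<circ> id) = push (\<lambda>y. restrict (y \<circ> id) (A m)) (H n) (H m) (dot \<beta> n h)"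
    by (rule D_comp[OF b _ h]) (use Amono[OF mn] in auto)
  then show ?thesis using S unfolding push_def by auto
qed

lemma MU_SG:
  assumes b: "\<beta> \<in> SG R A" and d: "\<delta> \<in> SG R A"
  shows "mult \<beta> \<delta> \<in> SG R A"
proof -
  have U: "\<forall>m. ultrafilter_on (H m) (mult \<beta> \<delta> m)"
  proof
    fix m
    show "ultrafilter_on (H m) (mult \<beta> \<delta> m)"
      unfolding mult_def by (rule uf_lim[OF SG_uf[OF d, of m], of "H m" "\<lambda>f. dot \<beta> m f"]) (rule dotH_uf[OF b])
  qed
  have C: "\<forall>m n. m \<le> n \<longrightarrow> mult \<beta> \<delta> m = push (\<lambda>f. restrict f (A m)) (H n) (H m) (mult \<beta> \<delta> n)"
  proof (intro allI impI)
    fix m n :: nat assume mn: "m \<le> n"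
    have "\<And>S. S \<in> mult \<beta> \<delta> m \<longleftrightarrow> S \<in> push (\<lambda>f. restrict f (A m)) (H n) (H m) (mult \<beta> \<delta> n)"
    proof -
      fix S
      show "?thesis S"
      proof (cases "S \<subseteq> H m")
        case False then show ?thesis unfolding mult_def push_def by auto
      next
        case True
        define F where "F = {f \<in> H m. S \<in> dot \<beta> m f}"
        define S' where "S' = {y \<in> H n. restrict y (A m) \<in> S}"
        have e1: "{h \<in> H n. restrict h (A m) \<in> F} = {h \<in> H n. S \<in> dot \<beta> m h}"
          unfolding F_def using rsH[OF _ mn] D_rs by auto
        have e2: "{h \<in> H n. S' \<in> dot \<beta> n h} = {h \<in> H n. S \<in> dot \<beta> m h}"
          unfolding S'_def using D_down[OF b mn _ True] by auto
        have "S \<in> mult \<beta> \<delta> m \<longleftrightarrow> F \<in> \<delta> m" unfolding mult_def F_def using True by auto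
        also have "\<dots> \<longleftrightarrow> {h \<in> H n. S \<in> dot \<beta> m h} \<in> \<delta> n"
          using pullback[OF d mn, of F] e1 unfolding F_def by auto
        also have "\<dots> \<longleftrightarrow> S' \<in> mult \<beta> \<delta> n" unfolding mult_def e2[symmetric] S'_def by auto
        also have "\<dots> \<longleftrightarrow> S \<in> push (\<lambda>f. restrict f (A m)) (H n) (H m) (mult \<beta> \<delta> n)"
          unfolding push_def S'_def using True by auto
        finally show ?thesis .
      qed
    qed
    then show "mult \<beta> \<delta> m = push (\<lambda>f. restrict f (A m)) (H n) (H m) (mult \<beta> \<delta> n)" by blast
  qed
  show ?thesis unfolding SG_def using U C by blast
qed

lemma MU_eqv:
  assumes u: "u \<in> SG R A" and b: "\<beta> \<in> SG R A" and g: "g \<in> Aut R"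
  shows "mult u (gact R A \<beta> g) = gact R A (mult u \<beta>) g"
proof
  fix m
  obtain n where n: "g ` A m \<subseteq> A n" using fin_level fin by blast
  have "\<And>S. S \<in> mult u (gact R A \<beta> g) m \<longleftrightarrow> S \<in> gact R A (mult u \<beta>) g m"
  proof -
    fix S
    show "?thesis S"
    proof (cases "S \<subseteq> H m")
      case False then show ?thesis unfolding mult_def gact_dot dot_def by auto
    next
      case True
      define T where "T = {y \<in> H n. restrict (y \<circ> g) (A m) \<in> S}"
      have e1: "{x \<in> H n. restrict (x \<circ> g) (A m) \<in> {f \<in> H m. S \<in> dot u m f}} = {x \<in> H n. S \<in> dot u m (x \<circ> g)}"
        using comp_H[OF _ aut_emb[OF g] n] D_rs by auto
      have e2: "{x \<in> H n. S \<in> dot u m (x \<circ> g)} = {x \<in> H n. T \<in> dot u n x}"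
        using D_comp[OF u n] True unfolding T_def push_def by auto
      have E1: "gact R A \<beta> g m = {T. T \<subseteq> H m \<and> {x \<in> H n. restrict (x \<circ> g) (A m) \<in> T} \<in> \<beta> n}"
        unfolding gact_dot by (rule D_lev[OF b n])
      have E2: "gact R A (mult u \<beta>) g m = {T. T \<subseteq> H m \<and> {x \<in> H n. restrict (x \<circ> g) (A m) \<in> T} \<in> mult u \<beta> n}"
        unfolding gact_dot by (rule D_lev[OF MU_SG[OF u b] n])
      have "S \<in> mult u (gact R A \<beta> g) m \<longleftrightarrow> {x \<in> H n. S \<in> dot u m (x \<circ> g)} \<in> \<beta> n"
        unfolding mult_def E1 e1[symmetric] using True by auto
      also have "\<dots> \<longleftrightarrow> S \<in> gact R A (mult u \<beta>) g m"
        unfolding E2 e2 using True by (auto simp: mult_def T_def)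
      finally show ?thesis .
    qed
  qed
  then show "mult u (gact R A \<beta> g) m = gact R A (mult u \<beta>) g m" by blast
qed

lemma DM:
  assumes a: "a \<in> SG R A" and b: "b \<in> SG R A" and f: "f \<in> H m"
  shows "S \<in> dot (mult a b) m f \<longleftrightarrow> S \<subseteq> H m \<and> {h \<in> H m. S \<in> dot a m h} \<in> dot b m f"
proof (cases "S \<subseteq> H m")
  case False then show ?thesis unfolding dot_def by auto
next
  case True
  obtain n where fn: "f ` A m \<subseteq> A n" using H_level[OF f] by blast
  have fe: "is_emb R (A m) f" using f H_iff by blast
  define T where "T = {x \<in> H n. restrict (x \<circ> f) (A m) \<in> S}"
  have e1: "{y \<in> H n. restrict (y \<circ> f) (A m) \<in> {h \<in> H m. S \<in> dot a m h}} = {y \<in> H n. S \<in> dot a m (y \<circ> f)}"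
    using comp_H[OF _ fe fn] D_rs by auto
  have e2: "{y \<in> H n. S \<in> dot a m (y \<circ> f)} = {y \<in> H n. T \<in> dot a n y}"
    using D_comp[OF a fn] True unfolding T_def push_def by auto
  have E1: "dot (mult a b) m f = {S. S \<subseteq> H m \<and> {x \<in> H n. restrict (x \<circ> f) (A m) \<in> S} \<in> mult a b n}"
    by (rule D_lev[OF MU_SG[OF a b] fn])
  have E2: "dot b m f = {S. S \<subseteq> H m \<and> {x \<in> H n. restrict (x \<circ> f) (A m) \<in> S} \<in> b n}"
    by (rule D_lev[OF b fn])
  have "S \<in> dot (mult a b) m f \<longleftrightarrow> {y \<in> H n. T \<in> dot a n y} \<in> b n"
    unfolding E1 using True by (auto simp: mult_def T_def)
  also have "\<dots> \<longleftrightarrow> S \<subseteq> H m \<and> {h \<in> H m. S \<in> dot a m h} \<in> dot b m f"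
    unfolding D_lev_mem[OF b fn, of "{h \<in> H m. S \<in> dot a m h}"] e1 e2 using True by blast
  finally show ?thesis .
qed

lemma MU_assoc:
  assumes a: "a \<in> SG R A" and b: "b \<in> SG R A" and c: "c \<in> SG R A"
  shows "mult (mult a b) c = mult a (mult b c)"
proof
  fix m
  have "\<And>S. S \<in> mult (mult a b) c m \<longleftrightarrow> S \<in> mult a (mult b c) m"
  proof -
    fix S
    have "{f \<in> H m. S \<in> dot (mult a b) m f} = {f \<in> H m. S \<subseteq> H m \<and> {h \<in> H m. S \<in> dot a m h} \<in> dot b m f}"
      using DM[OF a b] by auto
    then show "?thesis S" unfolding mult_def by auto
  qed
  then show "mult (mult a b) c m = mult a (mult b c) m" by blast
qed

end



context fk begin

abbreviation Bas where "Bas \<equiv> {{\<alpha> \<in> SG R A. S \<in> \<alpha> n} | n S. S \<subseteq> H n}"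

lemma SGtop_eq: "SGtop R A = topology_generated_by Bas"
  unfolding SGtop_def by simp

lemma topspace_SG: "topspace (SGtop R A) = SG R A"
proof -
  have "SG R A \<subseteq> \<Union>Bas"
  proof
    fix \<beta> assume b: "\<beta> \<in> SG R A"
    then have "\<beta> \<in> {\<alpha> \<in> SG R A. H 0 \<in> \<alpha> 0}" using uf_top[OF SG_uf[OF b]] by auto
    then show "\<beta> \<in> \<Union>Bas" by blast
  qed
  then show ?thesis unfolding SGtop_eq by auto
qed

lemma open_gen: "openin (SGtop R A) {\<alpha> \<in> SG R A. S \<in> \<alpha> n}"
proof (cases "S \<subseteq> H n")
  case True
  then show ?thesis unfolding SGtop_eq by (intro topology_generated_by_Basis) blast
next
  case False
  then have e: "{\<alpha> \<in> SG R A. S \<in> \<alpha> n} = {}" using uf_sub SG_uf by blast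
  show ?thesis by (subst e) simp
qed

lemma cont_into_SG:
  assumes im: "\<And>x. x \<in> topspace X \<Longrightarrow> f x \<in> SG R A"
    and op: "\<And>n S. S \<subseteq> H n \<Longrightarrow> openin X {x \<in> topspace X. S \<in> f x n}"
  shows "continuous_map X (SGtop R A) f"
  unfolding continuous_map_def
proof (intro conjI allI impI)
  show "f \<in> topspace X \<rightarrow> topspace (SGtop R A)" using im topspace_SG by auto
next
  fix U assume "openin (SGtop R A) U"
  then have "generate_topology_on Bas U" unfolding SGtop_eq by (rule openin_topology_generated_by)
  then show "openin X {x \<in> topspace X. f x \<in> U}"
  proof (induction rule: generate_topology_on.induct)
    case Empty then show ?case by simp
  next
    case (Int a b)
    have "{x \<in> topspace X. f x \<in> a \<inter> b} = {x \<in> topspace X. f x \<in> a} \<inter> {x \<in> topspace X. f x \<in> b}" by auto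
    then show ?case using Int by auto
  next
    case (UN K)
    have "{x \<in> topspace X. f x \<in> \<Union>K} = \<Union>{{x \<in> topspace X. f x \<in> k} | k. k \<in> K}" by auto
    then show ?case using UN by auto
  next
    case (Basis s)
    then obtain n S where s: "s = {\<alpha> \<in> SG R A. S \<in> \<alpha> n}" "S \<subseteq> H n" by blast
    have "{x \<in> topspace X. f x \<in> s} = {x \<in> topspace X. S \<in> f x n}" using s im by auto
    then show ?case using op[OF s(2)] by simp
  qed
qed

lemma nbhd_gen:
  assumes "generate_topology_on Bas U"
  shows "\<delta> \<in> U \<Longrightarrow> \<delta> \<in> SG R A \<Longrightarrow> \<exists>n T. T \<subseteq> H n \<and> T \<in> \<delta> n \<and> {\<epsilon> \<in> SG R A. T \<in> \<epsilon> n} \<subseteq> U"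
  using assms
proof (induction arbitrary: \<delta> rule: generate_topology_on.induct)
  case Empty then show ?case by simp
next
  case (Int a b)
  have da: "\<delta> \<in> a" and db: "\<delta> \<in> b" and dS: "\<delta> \<in> SG R A" using Int.prems by auto
  obtain n1 T1 where t1: "T1 \<subseteq> H n1" "T1 \<in> \<delta> n1" "{\<epsilon> \<in> SG R A. T1 \<in> \<epsilon> n1} \<subseteq> a"
    using Int.IH(1)[OF da dS] by blast
  obtain n2 T2 where t2: "T2 \<subseteq> H n2" "T2 \<in> \<delta> n2" "{\<epsilon> \<in> SG R A. T2 \<in> \<epsilon> n2} \<subseteq> b"
    using Int.IH(2)[OF db dS] by blast
  define N where "N = max n1 n2"
  have l1: "n1 \<le> N" and l2: "n2 \<le> N" unfolding N_def by auto
  define P1 where "P1 = {x \<in> H N. restrict x (A n1) \<in> T1}"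
  define P2 where "P2 = {x \<in> H N. restrict x (A n2) \<in> T2}"
  have p1: "\<And>\<epsilon>. \<epsilon> \<in> SG R A \<Longrightarrow> T1 \<in> \<epsilon> n1 \<longleftrightarrow> P1 \<in> \<epsilon> N" using pullback[OF _ l1] t1(1) unfolding P1_def by blast
  have p2: "\<And>\<epsilon>. \<epsilon> \<in> SG R A \<Longrightarrow> T2 \<in> \<epsilon> n2 \<longleftrightarrow> P2 \<in> \<epsilon> N" using pullback[OF _ l2] t2(1) unfolding P2_def by blast
  have s1: "P1 \<subseteq> H N" "P2 \<subseteq> H N" unfolding P1_def P2_def by auto
  have "P1 \<in> \<delta> N" "P2 \<in> \<delta> N" using p1[OF dS] p2[OF dS] t1 t2 by auto
  then have "P1 \<inter> P2 \<subseteq> H N" "P1 \<inter> P2 \<in> \<delta> N" using s1 uf_int[OF SG_uf[OF dS]] by auto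
  moreover have "{\<epsilon> \<in> SG R A. P1 \<inter> P2 \<in> \<epsilon> N} \<subseteq> a \<inter> b"
  proof
    fix \<epsilon> assume e: "\<epsilon> \<in> {\<epsilon> \<in> SG R A. P1 \<inter> P2 \<in> \<epsilon> N}"
    have eS: "\<epsilon> \<in> SG R A" using e by blast
    have "P1 \<inter> P2 \<in> \<epsilon> N" using e by blast
    then have "P1 \<in> \<epsilon> N" "P2 \<in> \<epsilon> N" using uf_up[OF SG_uf[OF eS]] s1 by auto
    moreover have "\<epsilon> \<in> SG R A" using e by blast
    ultimately have "T1 \<in> \<epsilon> n1" "T2 \<in> \<epsilon> n2" using p1 p2 by auto
    then show "\<epsilon> \<in> a \<inter> b" using t1(3) t2(3) \<open>\<epsilon> \<in> SG R A\<close> by blast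
  qed
  ultimately show ?case by blast
next
  case (UN K)
  then obtain k where k: "k \<in> K" "\<delta> \<in> k" by blast
  obtain n T where "T \<subseteq> H n \<and> T \<in> \<delta> n \<and> {\<epsilon> \<in> SG R A. T \<in> \<epsilon> n} \<subseteq> k"
    using UN.IH[OF k(1) k(2) UN.prems(2)] by blast
  then show ?case using k(1) by blast
next
  case (Basis s)
  then obtain n S where s: "s = {\<alpha> \<in> SG R A. S \<in> \<alpha> n}" "S \<subseteq> H n" by blast
  then show ?case using Basis by blast
qed

lemma nbhd:
  "openin (SGtop R A) U \<Longrightarrow> \<delta> \<in> U \<Longrightarrow> \<exists>n T. T \<subseteq> H n \<and> T \<in> \<delta> n \<and> {\<epsilon> \<in> SG R A. T \<in> \<epsilon> n} \<subseteq> U"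
proof -
  assume U: "openin (SGtop R A) U" and d: "\<delta> \<in> U"
  have "\<delta> \<in> SG R A" using openin_subset[OF U] d topspace_SG by auto
  moreover have "generate_topology_on Bas U" using U unfolding SGtop_eq by (rule openin_topology_generated_by)
  ultimately show ?thesis using nbhd_gen d by blast
qed

lemma Haus_SG: "Hausdorff_space (SGtop R A)"
  unfolding Hausdorff_space_def topspace_SG
proof (intro allI impI)
  fix x y assume xy: "x \<in> SG R A \<and> y \<in> SG R A \<and> x \<noteq> y"
  then obtain n where n: "x n \<noteq> y n" by blast
  have sep: "\<exists>U V. openin (SGtop R A) U \<and> openin (SGtop R A) V \<and> a \<in> U \<and> b \<in> V \<and> disjnt U V"
    if a: "a \<in> SG R A" and b: "b \<in> SG R A" and S: "S \<in> a n" "S \<notin> b n" for a b S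
  proof -
    have Sn: "S \<subseteq> H n" using uf_sub[OF SG_uf[OF a] S(1)] .
    have "H n - S \<in> b n" using uf_compl[OF SG_uf[OF b] Sn] S(2) by blast
    moreover have "disjnt {\<alpha> \<in> SG R A. S \<in> \<alpha> n} {\<alpha> \<in> SG R A. H n - S \<in> \<alpha> n}"
      unfolding disjnt_def
    proof (rule ccontr)
      assume "{\<alpha> \<in> SG R A. S \<in> \<alpha> n} \<inter> {\<alpha> \<in> SG R A. H n - S \<in> \<alpha> n} \<noteq> {}"
      then obtain \<alpha> where "\<alpha> \<in> SG R A" "S \<in> \<alpha> n" "H n - S \<in> \<alpha> n" by blast
      then show False using uf_compl[OF SG_uf Sn] by blast
    qed
    ultimately show ?thesis using open_gen a b S by blast
  qed
  show "\<exists>U V. openin (SGtop R A) U \<and> openin (SGtop R A) V \<and> x \<in> U \<and> y \<in> V \<and> disjnt U V"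
  proof (cases "\<exists>S. S \<in> x n \<and> S \<notin> y n")
    case True then show ?thesis using sep xy by blast
  next
    case False
    then obtain S where "S \<in> y n" "S \<notin> x n" using n by blast
    then show ?thesis using sep[of y x S] xy by (meson disjnt_sym)
  qed
qed


end

lemma cl1: "topspace X = UNIV \<Longrightarrow> continuous_map X (discrete_topology (UNIV::bool set)) (\<lambda>p. p i)
   \<Longrightarrow> closedin X {p. Q (p i)}"
proof -
  assume t: "topspace X = UNIV" and c: "continuous_map X (discrete_topology (UNIV::bool set)) (\<lambda>p. p i)"
  have "closedin X {x \<in> topspace X. x i \<in> {b. Q b}}"
    by (rule closedin_continuous_map_preimage[OF c]) simp
  then show ?thesis using t by simp
qed

abbreviation PT :: "('i \<Rightarrow> bool) topology" where
  "PT \<equiv> product_topology (\<lambda>_. discrete_topology (UNIV::bool set)) UNIV"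

lemma PT_top: "topspace PT = UNIV" by simp

lemma PT_proj: "continuous_map PT (discrete_topology (UNIV::bool set)) (\<lambda>p. p i)"
  by (rule continuous_map_product_projection) simp

lemma PT_cl1: "closedin PT {p. Q (p i)}"
  by (rule cl1[OF PT_top PT_proj])

lemma PT_op1: "openin PT {p. p i}"
proof -
  have "openin PT {x \<in> topspace PT. x i \<in> {True}}"
    by (rule openin_continuous_map_preimage[OF PT_proj]) simp
  then show ?thesis by simp
qed

lemma PT_cl2: "closedin PT {p. Q (p i) (p j)}"
proof -
  have e: "{p. Q (p i) (p j)} = ({p. p i} \<inter> {p. Q True (p j)}) \<union> ({p. \<not> p i} \<inter> {p. Q False (p j)})"
    by (auto; metis (full_types))
  have c1: "closedin PT {p. p i}" using PT_cl1[of "\<lambda>b. b" i] by simp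
  have c2: "closedin PT {p. \<not> p i}" using PT_cl1[of "\<lambda>b. \<not> b" i] by simp
  have c3: "closedin PT {p. Q True (p j)}" using PT_cl1[of "Q True" j] by simp
  have c4: "closedin PT {p. Q False (p j)}" using PT_cl1[of "Q False" j] by simp
  show ?thesis unfolding e by (intro closedin_Un closedin_Int c1 c2 c3 c4)
qed

lemma PT_cl3: "closedin PT {p. Q (p i) (p j) (p k)}"
proof -
  have e: "{p. Q (p i) (p j) (p k)} = ({p. p i} \<inter> {p. Q True (p j) (p k)}) \<union> ({p. \<not> p i} \<inter> {p. Q False (p j) (p k)})"
    by (auto; metis (full_types))
  have c1: "closedin PT {p. p i}" using PT_cl1[of "\<lambda>b. b" i] by simp
  have c2: "closedin PT {p. \<not> p i}" using PT_cl1[of "\<lambda>b. \<not> b" i] by simp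
  have c3: "closedin PT {p. Q True (p j) (p k)}" using PT_cl2[of "Q True" j k] by simp
  have c4: "closedin PT {p. Q False (p j) (p k)}" using PT_cl2[of "Q False" j k] by simp
  show ?thesis unfolding e by (intro closedin_Un closedin_Int c1 c2 c3 c4)
qed

lemma cl_all: "(\<And>i. closedin X {p. Q i p}) \<Longrightarrow> closedin X {p. \<forall>i. Q i p}"
proof -
  assume c: "\<And>i. closedin X {p. Q i p}"
  have "{p. \<forall>i. Q i p} = \<Inter>(range (\<lambda>i. {p. Q i p}))" by auto
  moreover have "closedin X (\<Inter>(range (\<lambda>i. {p. Q i p})))" using c by (intro closedin_Inter) auto
  ultimately show ?thesis by simp
qed

context fk begin

definition dd :: "(nat \<times> (nat \<Rightarrow> nat) set \<Rightarrow> bool) \<Rightarrow> nat \<Rightarrow> (nat \<Rightarrow> nat) set set" where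
  "dd p = (\<lambda>n. {S. p (n, S)})"

lemma dd_SG_iff: "dd p \<in> SG R A \<longleftrightarrow>
   (\<forall>n. (\<forall>S. p (n,S) \<longrightarrow> S \<subseteq> H n) \<and> p (n, H n) \<and> \<not> p (n, {})
   \<and> (\<forall>a b. p (n,a) \<and> p (n,b) \<longrightarrow> p (n, a \<inter> b))
   \<and> (\<forall>a b. p (n,a) \<and> a \<subseteq> b \<and> b \<subseteq> H n \<longrightarrow> p (n,b))
   \<and> (\<forall>a. a \<subseteq> H n \<longrightarrow> p (n,a) \<or> p (n, H n - a)))
   \<and> (\<forall>m n. m \<le> n \<longrightarrow> (\<forall>S. p (m,S) \<longleftrightarrow> S \<subseteq> H m \<and> p (n, {x \<in> H n. restrict x (A m) \<in> S})))"
proof -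
  have u: "\<And>n. ultrafilter_on (H n) (dd p n) \<longleftrightarrow> (\<forall>S. p (n,S) \<longrightarrow> S \<subseteq> H n) \<and> p (n, H n) \<and> \<not> p (n, {})
   \<and> (\<forall>a b. p (n,a) \<and> p (n,b) \<longrightarrow> p (n, a \<inter> b))
   \<and> (\<forall>a b. p (n,a) \<and> a \<subseteq> b \<and> b \<subseteq> H n \<longrightarrow> p (n,b))
   \<and> (\<forall>a. a \<subseteq> H n \<longrightarrow> p (n,a) \<or> p (n, H n - a))"
    unfolding ultrafilter_on_def dd_def Pow_def Collect_mono_iff mem_Collect_eq by (rule refl)
  have c: "\<And>m n. dd p m = push (\<lambda>f. restrict f (A m)) (H n) (H m) (dd p n) \<longleftrightarrow>
     (\<forall>S. p (m,S) \<longleftrightarrow> S \<subseteq> H m \<and> p (n, {x \<in> H n. restrict x (A m) \<in> S}))"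
    unfolding push_def dd_def by (simp add: set_eq_iff)
  show ?thesis unfolding SG_def mem_Collect_eq u c by (rule refl)
qed

lemma ee_dd: "dd (\<lambda>(n,S). S \<in> \<beta> n) = \<beta>"
  unfolding dd_def by auto

lemma cl_conj: "closedin X {p. P p} \<Longrightarrow> closedin X {p. Q p} \<Longrightarrow> closedin X {p. P p \<and> Q p}"
  by (simp add: Collect_conj_eq closedin_Int)

lemma C_closed: "closedin PT {p. dd p \<in> SG R A}"
  unfolding dd_SG_iff
proof (intro cl_conj cl_all)
  fix n S show "closedin PT {p. p (n, S) \<longrightarrow> S \<subseteq> H n}" using PT_cl1[of "\<lambda>b. b \<longrightarrow> S \<subseteq> H n" "(n,S)"] by simp
next
  fix n show "closedin PT {p. p (n, H n)}" using PT_cl1[of "\<lambda>b. b" "(n,H n)"] by simp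
next
  fix n show "closedin PT {p. \<not> p (n, {})}" using PT_cl1[of "\<lambda>b. \<not> b" "(n,{})"] by simp
next
  fix n a b show "closedin PT {p. p (n, a) \<and> p (n, b) \<longrightarrow> p (n, a \<inter> b)}"
    using PT_cl3[of "\<lambda>x y z. x \<and> y \<longrightarrow> z" "(n,a)" "(n,b)" "(n, a \<inter> b)"] by simp
next
  fix n a b show "closedin PT {p. p (n, a) \<and> a \<subseteq> b \<and> b \<subseteq> H n \<longrightarrow> p (n, b)}"
    using PT_cl2[of "\<lambda>x z. x \<and> a \<subseteq> b \<and> b \<subseteq> H n \<longrightarrow> z" "(n,a)" "(n,b)"] by simp
next
  fix n a show "closedin PT {p. a \<subseteq> H n \<longrightarrow> p (n, a) \<or> p (n, H n - a)}"
    using PT_cl2[of "\<lambda>x z. a \<subseteq> H n \<longrightarrow> x \<or> z" "(n,a)" "(n,H n - a)"] by simp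
next
  fix m n S show "closedin PT {p. m \<le> n \<longrightarrow> (\<forall>S. p (m, S) = (S \<subseteq> H m \<and> p (n, {x \<in> H n. restrict x (A m) \<in> S})))}"
  proof -
    have "\<And>S. closedin PT {p. m \<le> n \<longrightarrow> (p (m, S) = (S \<subseteq> H m \<and> p (n, {x \<in> H n. restrict x (A m) \<in> S})))}"
    proof -
      fix S show "closedin PT {p. m \<le> n \<longrightarrow> (p (m, S) = (S \<subseteq> H m \<and> p (n, {x \<in> H n. restrict x (A m) \<in> S})))}"
        using PT_cl2[of "\<lambda>x z. m \<le> n \<longrightarrow> (x = (S \<subseteq> H m \<and> z))" "(m,S)" "(n, {x \<in> H n. restrict x (A m) \<in> S})"] by simp
    qed
    then have "closedin PT {p. \<forall>S. m \<le> n \<longrightarrow> (p (m, S) = (S \<subseteq> H m \<and> p (n, {x \<in> H n. restrict x (A m) \<in> S})))}"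
      by (rule cl_all)
    then show ?thesis by simp
  qed
qed

lemma compact_SG: "compact_space (SGtop R A)"
proof -
  define C where "C = {p. dd p \<in> SG R A}"
  have cp: "compact_space (PT :: (nat \<times> (nat \<Rightarrow> nat) set \<Rightarrow> bool) topology)"
    by (simp add: compact_space_product_topology compact_space_discrete_topology)
  have "compactin PT C" unfolding C_def by (rule closedin_compact_space[OF cp C_closed])
  then have k: "compactin (subtopology PT C) C" by (simp add: compactin_subtopology)
  have ct: "continuous_map (subtopology PT C) (SGtop R A) dd"
  proof (rule cont_into_SG)
    fix x assume "x \<in> topspace (subtopology PT C)"
    then show "dd x \<in> SG R A" unfolding C_def by simp
  next
    fix n S
    have "{x \<in> topspace (subtopology PT C). S \<in> dd x n} = {p. p (n,S)} \<inter> C"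
      unfolding dd_def by auto
    then show "openin (subtopology PT C) {x \<in> topspace (subtopology PT C). S \<in> dd x n}"
      unfolding openin_subtopology using PT_op1 by metis
  qed
  have im: "dd ` C = SG R A"
  proof
    show "dd ` C \<subseteq> SG R A" unfolding C_def by auto
    show "SG R A \<subseteq> dd ` C"
    proof
      fix \<beta> assume b: "\<beta> \<in> SG R A"
      have "(\<lambda>(n,S). S \<in> \<beta> n) \<in> C" using b ee_dd[of \<beta>] by (simp add: C_def)
      then show "\<beta> \<in> dd ` C" using ee_dd[of \<beta>] by (metis image_eqI)
    qed
  qed
  show ?thesis unfolding compact_space_def topspace_SG
    using image_compactin[OF k ct] im by simp
qed

end



lemma disc_cont:
  assumes "\<And>b. openin X {x \<in> topspace X. f x = b}"
  shows "continuous_map X (discrete_topology (UNIV::bool set)) f"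
  unfolding continuous_map_def
proof (intro conjI allI impI)
  show "f \<in> topspace X \<rightarrow> topspace (discrete_topology UNIV)" by simp
next
  fix U :: "bool set"
  have "{x \<in> topspace X. f x \<in> U} = \<Union>{{x \<in> topspace X. f x = b} | b. b \<in> U}" by auto
  then show "openin X {x \<in> topspace X. f x \<in> U}" using assms by auto
qed

context fk begin

lemma MU_cont: "u \<in> SG R A \<Longrightarrow> continuous_map (SGtop R A) (SGtop R A) (mult u)"
proof (rule cont_into_SG)
  fix x assume "u \<in> SG R A" "x \<in> topspace (SGtop R A)"
  then show "mult u x \<in> SG R A" using MU_SG topspace_SG by auto
next
  fix n S assume S: "S \<subseteq> H n"
  have "{x \<in> topspace (SGtop R A). S \<in> mult u x n} = {\<alpha> \<in> SG R A. {f \<in> H n. S \<in> dot u n f} \<in> \<alpha> n}"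
    unfolding topspace_SG mult_def using S by auto
  then show "openin (SGtop R A) {x \<in> topspace (SGtop R A). S \<in> mult u x n}" using open_gen by simp
qed

lemma M_right:
  assumes M: "minimal_flow (SGtop R A) (gact R A) (Aut R) M" and u: "u \<in> M" and b: "\<beta> \<in> SG R A"
  shows "mult u \<beta> \<in> M"
proof (rule ccontr)
  assume nm: "mult u \<beta> \<notin> M"
  have Mc: "closedin (SGtop R A) M" and Mi: "\<forall>y\<in>M. \<forall>g\<in>Aut R. gact R A y g \<in> M"
    using M unfolding minimal_flow_def by auto
  have uS: "u \<in> SG R A" using closedin_subset[OF Mc] u topspace_SG by auto
  have op: "openin (SGtop R A) (SG R A - M)" using Mc unfolding closedin_def topspace_SG by auto
  have "mult u \<beta> \<in> SG R A - M" using nm MU_SG[OF uS b] by auto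
  then obtain n T where T: "T \<subseteq> H n" "T \<in> mult u \<beta> n" "{\<epsilon> \<in> SG R A. T \<in> \<epsilon> n} \<subseteq> SG R A - M"
    using nbhd[OF op] by blast
  have "{f \<in> H n. T \<in> dot u n f} \<in> \<beta> n" using T(2) unfolding mult_def by auto
  then have "{f \<in> H n. T \<in> dot u n f} \<noteq> {}" using uf_ne[OF SG_uf[OF b]] by blast
  then obtain f where f: "f \<in> H n" "T \<in> dot u n f" by blast
  obtain g where g: "g \<in> Aut R" "\<forall>x\<in>A n. g x = f x" using extend[OF f(1)] by blast
  have "gact R A u g n = dot u n f" unfolding gact_dot using g(2) by (intro D_cong) auto
  then have "gact R A u g \<in> {\<epsilon> \<in> SG R A. T \<in> \<epsilon> n}" using f(2) GA_SG[OF uS g(1)] by auto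
  moreover have "gact R A u g \<in> M" using Mi u g(1) by auto
  ultimately show False using T(3) by auto
qed

definition Phi :: "nat \<Rightarrow> (nat \<Rightarrow> nat) set \<Rightarrow> (nat \<Rightarrow> (nat \<Rightarrow> nat) set set) \<Rightarrow> ((nat \<Rightarrow> nat) \<Rightarrow> bool)" where
  "Phi m S \<beta> = restrict (\<lambda>f. S \<in> dot \<beta> m f) (H m)"

lemma gH: "g \<in> Aut R \<Longrightarrow> f \<in> H m \<Longrightarrow> restrict (g \<circ> f) (A m) \<in> H m"
  using rs_H emb_comp H_iff aut_emb by (metis subset_UNIV)

lemma Phi_cont:
  assumes S: "S \<subseteq> H m"
  shows "continuous_map (SGtop R A) (cube_top R A m) (Phi m S)"
  unfolding cube_top_def continuous_map_componentwise
proof (intro conjI ballI)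
  show "Phi m S ` topspace (SGtop R A) \<subseteq> extensional (H m)" unfolding Phi_def by auto
next
  fix k assume k: "k \<in> H m"
  obtain n where n: "k ` A m \<subseteq> A n" using H_level[OF k] by blast
  define T where "T = {x \<in> H n. restrict (x \<circ> k) (A m) \<in> S}"
  have TH: "T \<subseteq> H n" unfolding T_def by auto
  have e: "\<And>\<beta>. \<beta> \<in> SG R A \<Longrightarrow> Phi m S \<beta> k \<longleftrightarrow> T \<in> \<beta> n"
    unfolding Phi_def T_def using k D_lev_mem[OF _ n] S by auto
  show "continuous_map (SGtop R A) (discrete_topology UNIV) (\<lambda>x. Phi m S x k)"
  proof (rule disc_cont)
    fix b :: bool
    show "openin (SGtop R A) {x \<in> topspace (SGtop R A). Phi m S x k = b}"
    proof (cases b)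
      case True
      then have "{x \<in> topspace (SGtop R A). Phi m S x k = b} = {\<alpha> \<in> SG R A. T \<in> \<alpha> n}"
        unfolding topspace_SG using e by auto
      then show ?thesis using open_gen by simp
    next
      case False
      have "\<And>\<alpha>. \<alpha> \<in> SG R A \<Longrightarrow> T \<notin> \<alpha> n \<longleftrightarrow> H n - T \<in> \<alpha> n" using uf_compl[OF SG_uf TH] by blast
      then have "{x \<in> topspace (SGtop R A). Phi m S x k = b} = {\<alpha> \<in> SG R A. H n - T \<in> \<alpha> n}"
        unfolding topspace_SG using e False by auto
      then show ?thesis using open_gen by simp
    qed
  qed
qed

lemma Phi_in_X:
  assumes S: "S \<subseteq> H m" and b: "\<beta> \<in> SG R A"
  shows "Phi m S \<beta> \<in> (cube_top R A m) closure_of ((\<lambda>g. cact R A m (chi R A m S) g) ` Aut R)"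
  unfolding in_closure_of
proof (intro conjI allI impI)
  show "Phi m S \<beta> \<in> topspace (cube_top R A m)" unfolding cube_top_def Phi_def by (simp add: PiE_iff)
next
  fix W assume W: "Phi m S \<beta> \<in> W \<and> openin (cube_top R A m) W"
  then obtain U where U: "finite {i \<in> H m. U i \<noteq> UNIV}" "Phi m S \<beta> \<in> Pi\<^sub>E (H m) U" "Pi\<^sub>E (H m) U \<subseteq> W"
    unfolding cube_top_def openin_product_topology_alt by auto
  define F where "F = {i \<in> H m. U i \<noteq> UNIV}"
  have Ffin: "finite F" and FH: "F \<subseteq> H m" using U(1) unfolding F_def by auto
  obtain n where n: "\<forall>f\<in>F. f ` A m \<subseteq> A n" using H_level_fin[OF Ffin FH] by blast
  have each: "\<And>f. f \<in> F \<Longrightarrow> {x \<in> H n. (restrict (x \<circ> f) (A m) \<in> S) = (S \<in> dot \<beta> m f)} \<in> \<beta> n"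
  proof -
    fix f assume f: "f \<in> F"
    define P where "P = {x \<in> H n. restrict (x \<circ> f) (A m) \<in> S}"
    have PH: "P \<subseteq> H n" unfolding P_def by auto
    have dm: "S \<in> dot \<beta> m f \<longleftrightarrow> P \<in> \<beta> n" using D_lev_mem[OF b] n f S unfolding P_def by blast
    show "{x \<in> H n. (restrict (x \<circ> f) (A m) \<in> S) = (S \<in> dot \<beta> m f)} \<in> \<beta> n"
    proof (cases "S \<in> dot \<beta> m f")
      case True
      then have "{x \<in> H n. (restrict (x \<circ> f) (A m) \<in> S) = (S \<in> dot \<beta> m f)} = P" unfolding P_def by auto
      then show ?thesis using dm True by simp
    next
      case False
      then have "{x \<in> H n. (restrict (x \<circ> f) (A m) \<in> S) = (S \<in> dot \<beta> m f)} = H n - P" unfolding P_def by auto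
      then show ?thesis using dm False uf_compl[OF SG_uf[OF b] PH] by simp
    qed
  qed
  have "{x \<in> H n. \<forall>f\<in>F. (restrict (x \<circ> f) (A m) \<in> S) = (S \<in> dot \<beta> m f)} \<in> \<beta> n"
    by (rule uf_finite[OF SG_uf[OF b] Ffin each])
  then have "{x \<in> H n. \<forall>f\<in>F. (restrict (x \<circ> f) (A m) \<in> S) = (S \<in> dot \<beta> m f)} \<noteq> {}"
    using uf_ne[OF SG_uf[OF b]] by blast
  then obtain x where x: "x \<in> H n" "\<forall>f\<in>F. (restrict (x \<circ> f) (A m) \<in> S) = (S \<in> dot \<beta> m f)" by blast
  obtain g where g: "g \<in> Aut R" "\<forall>y\<in>A n. g y = x y" using extend[OF x(1)] by blast
  define y where "y = cact R A m (chi R A m S) g"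
  have "y \<in> Pi\<^sub>E (H m) U"
    unfolding PiE_iff
  proof (intro conjI ballI)
    show "y \<in> extensional (H m)" unfolding y_def cact_def by simp
  next
    fix f assume f: "f \<in> H m"
    show "y f \<in> U f"
    proof (cases "f \<in> F")
      case False then show ?thesis unfolding F_def using f by auto
    next
      case True
      have e1: "restrict (g \<circ> f) (A m) = restrict (x \<circ> f) (A m)"
        using g(2) n True by (intro restrict_ext) auto
      have "y f = (restrict (g \<circ> f) (A m) \<in> S)"
        unfolding y_def cact_def chi_def using f gH[OF g(1) f] by simp
      also have "\<dots> = (S \<in> dot \<beta> m f)" using e1 x(2) True by simp
      also have "\<dots> = Phi m S \<beta> f" unfolding Phi_def using f by simp
      finally show ?thesis using U(2) f by (auto simp: PiE_iff)
    qed
  qed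
  then show "\<exists>y. y \<in> (\<lambda>g. cact R A m (chi R A m S) g) ` Aut R \<and> y \<in> W"
    using U(3) g(1) unfolding y_def by blast
qed

lemma Phi_eqv:
  assumes b: "\<beta> \<in> SG R A" and g: "g \<in> Aut R"
  shows "cact R A m (Phi m S \<beta>) g = Phi m S (gact R A \<beta> g)"
  unfolding cact_def Phi_def
proof (rule restrict_ext)
  fix f assume f: "f \<in> H m"
  have "restrict (\<lambda>f. S \<in> dot \<beta> m f) (H m) (restrict (g \<circ> f) (A m)) = (S \<in> dot \<beta> m (restrict (g \<circ> f) (A m)))"
    using gH[OF g f] by simp
  also have "\<dots> = (S \<in> dot \<beta> m (g \<circ> f))" by (simp only: D_rs)
  also have "\<dots> = (S \<in> dot (gact R A \<beta> g) m f)" using D_gact[OF b g f] by simp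
  finally show "restrict (\<lambda>f. S \<in> dot \<beta> m f) (H m) (restrict (g \<circ> f) (A m)) = (S \<in> dot (gact R A \<beta> g) m f)" .
qed

lemma chi_orbit: "chi R A m S = cact R A m (chi R A m S) id"
  unfolding cact_def
proof -
  have "\<And>f. f \<in> H m \<Longrightarrow> restrict (id \<circ> f) (A m) = f" using H_ext by simp
  then show "chi R A m S = restrict (\<lambda>f. chi R A m S (restrict (id \<circ> f) (A m))) (H m)"
    unfolding chi_def by (auto simp: fun_eq_iff restrict_def)
qed

lemma Phi_chi_iff: "Phi m S w = chi R A m S \<longleftrightarrow> (\<forall>f\<in>H m. (S \<in> dot w m f) = (f \<in> S))"
  unfolding Phi_def chi_def by (auto simp: fun_eq_iff restrict_def)

end



context fk begin

lemma Haus_cube: "Hausdorff_space (cube_top R A m)"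
  unfolding cube_top_def by (simp add: Hausdorff_space_product_topology)

lemma K_ne:
  assumes M: "minimal_flow (SGtop R A) (gact R A) (Aut R) M" and Smin: "minimal_set R A m S"
  shows "\<exists>w\<in>M. Phi m S w = chi R A m S"
proof -
  have S: "S \<subseteq> H m" and X: "minimal_flow (cube_top R A m) (cact R A m) (Aut R)
       ((cube_top R A m) closure_of ((\<lambda>g. cact R A m (chi R A m S) g) ` Aut R))"
    using Smin unfolding minimal_set_def by auto
  define X0 where "X0 = (cube_top R A m) closure_of ((\<lambda>g. cact R A m (chi R A m S) g) ` Aut R)"
  have Mne: "M \<noteq> {}" and Mc: "closedin (SGtop R A) M" and Mi: "\<forall>y\<in>M. \<forall>g\<in>Aut R. gact R A y g \<in> M"
    using M unfolding minimal_flow_def by auto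
  have MS: "M \<subseteq> SG R A" using closedin_subset[OF Mc] topspace_SG by auto
  define Z where "Z = Phi m S ` M"
  have Zs: "Z \<subseteq> X0" unfolding Z_def X0_def using Phi_in_X[OF S] MS by auto
  have Zne: "Z \<noteq> {}" unfolding Z_def using Mne by auto
  have "compactin (SGtop R A) M" by (rule closedin_compact_space[OF compact_SG Mc])
  then have "compactin (cube_top R A m) Z" unfolding Z_def by (rule image_compactin[OF _ Phi_cont[OF S]])
  then have Zc: "closedin (cube_top R A m) Z" by (rule compactin_imp_closedin[OF Haus_cube])
  have Zi: "\<forall>z\<in>Z. \<forall>g\<in>Aut R. cact R A m z g \<in> Z"
  proof (intro ballI)
    fix z g assume z: "z \<in> Z" and g: "g \<in> Aut R"
    then obtain w where w: "w \<in> M" "z = Phi m S w" unfolding Z_def by blast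
    have "cact R A m z g = Phi m S (gact R A w g)" using Phi_eqv[OF _ g] w MS by auto
    then show "cact R A m z g \<in> Z" unfolding Z_def using Mi w g by auto
  qed
  have "Z = X0" using X Zs Zne Zc Zi unfolding minimal_flow_def X0_def by blast
  moreover have "chi R A m S \<in> X0"
  proof -
    have sub: "(\<lambda>g. cact R A m (chi R A m S) g) ` Aut R \<subseteq> topspace (cube_top R A m)"
      unfolding cube_top_def cact_def by (auto simp: PiE_iff)
    have "chi R A m S \<in> (\<lambda>g. cact R A m (chi R A m S) g) ` Aut R" using chi_orbit id_Aut by blast
    then show ?thesis unfolding X0_def using closure_of_subset[OF sub] by blast
  qed
  ultimately show ?thesis unfolding Z_def by auto
qed

lemma chain_min: "finite F \<Longrightarrow> F \<noteq> {} \<Longrightarrow> (\<forall>a\<in>F. \<forall>b\<in>F. a \<subseteq> b \<or> b \<subseteq> a) \<Longrightarrow> \<exists>B\<in>F. \<forall>B'\<in>F. B \<subseteq> B'"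
proof (induction F rule: finite_ne_induct)
  case (singleton x) then show ?case by auto
next
  case (insert x F)
  then obtain B where B: "B \<in> F" "\<forall>B'\<in>F. B \<subseteq> B'" by auto
  show ?case
  proof (cases "x \<subseteq> B")
    case True then show ?thesis using B by auto
  next
    case False
    then have "B \<subseteq> x" using insert.prems B(1) by auto
    then show ?thesis using B by auto
  qed
qed

lemma ellis:
  assumes KS: "K \<subseteq> SG R A" and Kne: "K \<noteq> {}" and Kc: "closedin (SGtop R A) K"
    and Km: "\<forall>x\<in>K. \<forall>y\<in>K. mult x y \<in> K"
  shows "\<exists>u\<in>K. mult u u = u"
proof -
  define FF where "FF = {B. B \<subseteq> K \<and> B \<noteq> {} \<and> closedin (SGtop R A) B \<and> (\<forall>x\<in>B. \<forall>y\<in>B. mult x y \<in> B)}"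
  have KFF: "K \<in> FF" unfolding FF_def using Kne Kc Km by auto
  have po: "partial_order_on FF (relation_of (\<lambda>a b. b \<subseteq> a) FF)"
    unfolding partial_order_on_def preorder_on_def refl_on_def trans_def antisym_def relation_of_def
    by auto
  have ch: "\<exists>u\<in>FF. \<forall>a\<in>C. u \<subseteq> a" if C: "C \<in> Chains (relation_of (\<lambda>a b. b \<subseteq> a) FF)" for C
  proof (cases "C = {}")
    case True then show ?thesis using KFF by auto
  next
    case False
    have CF: "C \<subseteq> FF" using C False unfolding Chains_def relation_of_def by auto
    have Cch: "\<forall>a\<in>C. \<forall>b\<in>C. a \<subseteq> b \<or> b \<subseteq> a" using C unfolding Chains_def relation_of_def by auto
    have ccl: "\<forall>c\<in>C. closedin (SGtop R A) c" using CF unfolding FF_def by auto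
    have "\<Inter>C \<noteq> {}"
      using compact_SG unfolding compact_space_fip
    proof (elim allE impE)
      show "(\<forall>c\<in>C. closedin (SGtop R A) c) \<and> (\<forall>F. finite F \<and> F \<subseteq> C \<longrightarrow> \<Inter>F \<noteq> {})"
      proof (intro conjI allI impI)
        show "\<forall>c\<in>C. closedin (SGtop R A) c" by (rule ccl)
      next
        fix F assume F: "finite F \<and> F \<subseteq> C"
        show "\<Inter>F \<noteq> {}"
        proof (cases "F = {}")
          case True then show ?thesis by auto
        next
          case False
          then obtain B where B: "B \<in> F" "\<forall>B'\<in>F. B \<subseteq> B'" using chain_min[of F] F Cch by blast
          then have "B \<subseteq> \<Inter>F" by auto
          moreover have "B \<noteq> {}" using B(1) F CF unfolding FF_def by auto
          ultimately show ?thesis by auto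
        qed
      qed
    qed
    moreover have "\<Inter>C \<subseteq> K"
    proof -
      obtain c where c: "c \<in> C" using False by blast
      then have "c \<subseteq> K" using CF unfolding FF_def by auto
      then show ?thesis using c by blast
    qed
    moreover have "closedin (SGtop R A) (\<Inter>C)" using ccl False by (intro closedin_Inter) auto
    moreover have "\<forall>x\<in>\<Inter>C. \<forall>y\<in>\<Inter>C. mult x y \<in> \<Inter>C" using CF unfolding FF_def by blast
    ultimately have "\<Inter>C \<in> FF" unfolding FF_def by blast
    then show ?thesis by auto
  qed
  obtain B0 where B0: "B0 \<in> FF" "\<forall>a\<in>FF. a \<subseteq> B0 \<longrightarrow> a = B0"
    using predicate_Zorn[OF po ch] by blast
  have B0K: "B0 \<subseteq> K" and B0ne: "B0 \<noteq> {}" and B0c: "closedin (SGtop R A) B0"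
    and B0m: "\<forall>x\<in>B0. \<forall>y\<in>B0. mult x y \<in> B0" using B0(1) unfolding FF_def by auto
  obtain a where a: "a \<in> B0" using B0ne by blast
  have aS: "a \<in> SG R A" using a B0K KS by auto
  have B0S: "B0 \<subseteq> SG R A" using B0K KS by auto
  have B0cp: "compactin (SGtop R A) B0" by (rule closedin_compact_space[OF compact_SG B0c])
  have "mult a ` B0 \<in> FF"
    unfolding FF_def
  proof (intro CollectI conjI ballI)
    show "mult a ` B0 \<subseteq> K" using B0m a B0K by auto
    show "mult a ` B0 \<noteq> {}" using B0ne by auto
    show "closedin (SGtop R A) (mult a ` B0)"
      by (rule compactin_imp_closedin[OF Haus_SG image_compactin[OF B0cp MU_cont[OF aS]]])
  next
    fix x y assume x: "x \<in> mult a ` B0" and y: "y \<in> mult a ` B0"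
    then obtain x' y' where xy: "x' \<in> B0" "y' \<in> B0" "x = mult a x'" "y = mult a y'" by blast
    have "mult x y = mult a (mult x' (mult a y'))"
      using MU_assoc xy aS B0S by (simp add: MU_SG subset_iff)
    moreover have "mult x' (mult a y') \<in> B0" using B0m xy a by auto
    ultimately show "mult x y \<in> mult a ` B0" by auto
  qed
  moreover have "mult a ` B0 \<subseteq> B0" using B0m a by auto
  ultimately have aB: "mult a ` B0 = B0" using B0(2) by blast
  define C where "C = {x \<in> B0. mult a x = a}"
  have "C \<in> FF"
    unfolding FF_def
  proof (intro CollectI conjI ballI)
    show "C \<subseteq> K" unfolding C_def using B0K by auto
    show "C \<noteq> {}" unfolding C_def using a aB by (metis (mono_tags, lifting) empty_iff image_iff mem_Collect_eq)
    have "closedin (SGtop R A) {x \<in> topspace (SGtop R A). mult a x \<in> {a}}"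
      by (rule closedin_continuous_map_preimage[OF MU_cont[OF aS] closedin_Hausdorff_singleton[OF Haus_SG]])
        (simp add: topspace_SG aS)
    moreover have "C = B0 \<inter> {x \<in> topspace (SGtop R A). mult a x \<in> {a}}" unfolding C_def topspace_SG using B0S by auto
    ultimately show "closedin (SGtop R A) C" using B0c by (simp add: closedin_Int)
  next
    fix x y assume x: "x \<in> C" and y: "y \<in> C"
    have xS: "x \<in> SG R A" "y \<in> SG R A" using x y B0S unfolding C_def by auto
    have "mult a (mult x y) = mult (mult a x) y" using MU_assoc[OF aS xS(1) xS(2)] by simp
    also have "\<dots> = a" using x y unfolding C_def by auto
    finally show "mult x y \<in> C" using B0m x y unfolding C_def by auto
  qed
  moreover have "C \<subseteq> B0" unfolding C_def by auto
  ultimately have "C = B0" using B0(2) by blast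
  then have "a \<in> C" using a by simp
  then show ?thesis using a B0K unfolding C_def by auto
qed

end

theorem mainTheorem16:
  fixes ar :: "'r \<Rightarrow> nat" and R :: "'r \<Rightarrow> nat list \<Rightarrow> bool"
    and A :: "nat \<Rightarrow> nat set"
    and M :: "(nat \<Rightarrow> (nat \<Rightarrow> nat) set set) set"
    and \<alpha> \<gamma> :: "nat \<Rightarrow> (nat \<Rightarrow> nat) set set"
    and m :: nat and S :: "(nat \<Rightarrow> nat) set"
  assumes arity: "\<And>r xs. R r xs \<Longrightarrow> length xs = ar r"
    and uh: "ultrahomogeneous R"
    and chain: "\<And>n. A n \<subseteq> A (Suc n)"
    and fin: "\<And>n. finite (A n)"
    and card: "\<And>n. card (A n) = n"
    and exh: "(\<Union>n. A n) = UNIV"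
    and M: "minimal_flow (SGtop R A) (gact R A) (Aut R) M"
    and \<alpha>: "\<alpha> \<in> SG R A" and \<gamma>: "\<gamma> \<in> SG R A"
    and ret: "\<And>\<phi>. retraction R A M \<phi> \<Longrightarrow> \<phi> \<alpha> = \<phi> \<gamma>"
    and S: "minimal_set R A m S"
  shows "S \<in> \<alpha> m \<longleftrightarrow> S \<in> \<gamma> m"
proof -
  interpret fk R A using uh chain fin exh by unfold_locales auto
  have SH: "S \<subseteq> Hset R A m" using S unfolding minimal_set_def by auto
  have Mne: "M \<noteq> {}" and Mc: "closedin (SGtop R A) M" and Mi: "\<forall>y\<in>M. \<forall>g\<in>Aut R. gact R A y g \<in> M"
    and Mmin: "\<And>Z. Z \<subseteq> M \<and> Z \<noteq> {} \<and> closedin (SGtop R A) Z \<and> (\<forall>z\<in>Z. \<forall>g\<in>Aut R. gact R A z g \<in> Z) \<Longrightarrow> Z = M"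
    using M unfolding minimal_flow_def by auto
  have MS: "M \<subseteq> SG R A" using closedin_subset[OF Mc] topspace_SG by auto
  define K where "K = {w \<in> M. Phi m S w = chi R A m S}"
  have KS: "K \<subseteq> SG R A" unfolding K_def using MS by auto
  have Kne: "K \<noteq> {}" unfolding K_def using K_ne[OF M S] by auto
  have Kc: "closedin (SGtop R A) K"
  proof -
    have ct: "chi R A m S \<in> topspace (cube_top R A m)" unfolding cube_top_def chi_def by (simp add: PiE_iff)
    have "closedin (SGtop R A) {x \<in> topspace (SGtop R A). Phi m S x \<in> {chi R A m S}}"
      by (rule closedin_continuous_map_preimage[OF Phi_cont[OF SH] closedin_Hausdorff_singleton[OF Haus_cube ct]])
    moreover have "K = M \<inter> {x \<in> topspace (SGtop R A). Phi m S x \<in> {chi R A m S}}"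
      unfolding K_def topspace_SG using MS by auto
    ultimately show ?thesis using Mc by (simp add: closedin_Int)
  qed
  have Km: "\<forall>x\<in>K. \<forall>y\<in>K. mult x y \<in> K"
  proof (intro ballI)
    fix x y assume x: "x \<in> K" and y: "y \<in> K"
    have xS: "x \<in> SG R A" and yS: "y \<in> SG R A" using x y KS by auto
    have "mult x y \<in> M" using M_right[OF M _ yS] x unfolding K_def by auto
    moreover have "Phi m S (mult x y) = chi R A m S"
      unfolding Phi_chi_iff
    proof
      fix f assume f: "f \<in> Hset R A m"
      have fx: "\<forall>h\<in>Hset R A m. (S \<in> dot x m h) = (h \<in> S)" using x unfolding K_def Phi_chi_iff by auto
      have fy: "\<forall>h\<in>Hset R A m. (S \<in> dot y m h) = (h \<in> S)" using y unfolding K_def Phi_chi_iff by auto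
      have e: "{h \<in> Hset R A m. S \<in> dot x m h} = S" using fx SH by auto
      show "(S \<in> dot (mult x y) m f) = (f \<in> S)" unfolding DM[OF xS yS f] e using SH fy f by auto
    qed
    ultimately show "mult x y \<in> K" unfolding K_def by auto
  qed
  obtain u where u: "u \<in> K" "mult u u = u" using ellis[OF KS Kne Kc Km] by blast
  have uM: "u \<in> M" and uS: "u \<in> SG R A" using u KS unfolding K_def by auto
  have uchi: "\<forall>h\<in>Hset R A m. (S \<in> dot u m h) = (h \<in> S)" using u(1) unfolding K_def Phi_chi_iff by auto
  have fix_M: "\<forall>\<beta>\<in>M. mult u \<beta> = \<beta>"
  proof -
    define Z where "Z = {\<beta> \<in> M. mult u \<beta> = \<beta>}"
    have "closedin (SGtop R A) {x \<in> topspace (SGtop R A). mult u x = id x}"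
      by (rule closedin_continuous_maps_eq[OF Haus_SG MU_cont[OF uS] continuous_map_id])
    moreover have "Z = M \<inter> {x \<in> topspace (SGtop R A). mult u x = id x}" unfolding Z_def topspace_SG using MS by auto
    ultimately have Zc: "closedin (SGtop R A) Z" using Mc by (simp add: closedin_Int)
    have Zne: "Z \<noteq> {}" unfolding Z_def using uM u(2) by auto
    have Zi: "\<forall>z\<in>Z. \<forall>g\<in>Aut R. gact R A z g \<in> Z"
    proof (intro ballI)
      fix z g assume z: "z \<in> Z" and g: "g \<in> Aut R"
      have zS: "z \<in> SG R A" using z MS unfolding Z_def by auto
      have "mult u (gact R A z g) = gact R A (mult u z) g" by (rule MU_eqv[OF uS zS g])
      also have "\<dots> = gact R A z g" using z unfolding Z_def by auto
      finally show "gact R A z g \<in> Z" unfolding Z_def using Mi z g unfolding Z_def by auto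
    qed
    have Zsub: "Z \<subseteq> M" unfolding Z_def by auto
    have "Z = M" using Mmin[of Z] Zsub Zc Zne Zi by blast
    then show ?thesis unfolding Z_def by auto
  qed
  have "retraction R A M (mult u)"
    unfolding retraction_def
  proof (intro conjI ballI)
    show "continuous_map (SGtop R A) (SGtop R A) (mult u)" by (rule MU_cont[OF uS])
    show "mult u ` SG R A \<subseteq> M" using M_right[OF M uM] by auto
  next
    fix \<beta> g assume "\<beta> \<in> SG R A" "g \<in> Aut R"
    then show "mult u (gact R A \<beta> g) = gact R A (mult u \<beta>) g" using MU_eqv[OF uS] by auto
  next
    fix \<beta> assume "\<beta> \<in> M" then show "mult u \<beta> = \<beta>" using fix_M by auto
  qed
  then have eq: "mult u \<alpha> = mult u \<gamma>" by (rule ret)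
  have e: "{f \<in> Hset R A m. S \<in> dot u m f} = S" using uchi SH by auto
  have "\<And>\<beta>. \<beta> \<in> SG R A \<Longrightarrow> S \<in> mult u \<beta> m \<longleftrightarrow> S \<in> \<beta> m"
  proof -
    fix \<beta> assume b: "\<beta> \<in> SG R A"
    have "S \<in> mult u \<beta> m \<longleftrightarrow> S \<subseteq> Hset R A m \<and> {f \<in> Hset R A m. S \<in> dot u m f} \<in> \<beta> m"
      unfolding mult_def by simp
    then show "S \<in> mult u \<beta> m \<longleftrightarrow> S \<in> \<beta> m" using SH e by simp
  qed
  then show ?thesis using eq \<alpha> \<gamma> by metis
qed


end
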